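(* Let $(X,\overline p)$ be a perverse space and let $x\in X$ be an isolated singular point, i.e. $\{x\}$ is a singular stratum of $X$. Set $\ell=D\overline p(\{x\})+1$, and let $X\setminus\{x\}$ carry the induced filtration and perversity. Then the $\ell$-skeleta of $\mathscr G_{\overline p}X$ and $\mathscr G_{\overline p}(X\setminus\{x\})$ are isomorphic.
   Context: Filtered spaces. A filtered space of formal dimension $n$ is a nonempty space $X$ with closed subsets $\emptyset=X_{-1}\subseteq\cdots\subseteq X_{n-1}\subsetneq X_n=X$. Strata are the nonempty connected components of $X_i\setminus X_{i-1}$, with codimension $n-i$. Strata in $X\setminus X_{n-1}$ are regular. An open subset $U$ has the induced filtration $U\cap X_i$ and the induced perversity, namely the value of $\overline p$ on the stratum of $X$ containing a given stratum of $U$. Perversities. A perversity is a map $\overline p$ from strata to $\mathbb Z\cup\{\pm\infty\}$ vanishing on regular strata. The top perversity is $\overline t(S)=\operatorname{codim}S-2$, and $D\overline p=\overline t-\overline p$. Full simplices and the Gajer space. A simplex $\sigma\colon\Delta^j\to X$ is $\overline p$-allowable if $\dim\sigma^{-1}S\le j-\operatorname{codim}S+\overline p(S)$ for every singular stratum $S$. Here $\dim$ is polyhedral dimension, with $\dim\emptyset=-\infty$. A simplex is $\overline p$-full if it and all its iterated faces are allowable. $\mathscr G_{\overline p}X\subseteq\mathrm{Sing}\,X$ is the simplicial set of $\overline p$-full simplices. *)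

theory Defs
  imports "HOL-Analysis.Analysis" "HOL-Homology.Homology" "HOL-Library.Extended"
begin

text \<open>A filtration of formal dimension n is given by F 0, ..., F n (values of F
  above n are irrelevant); X_{-1} is the empty set, encoded by prevF.\<close>

definition prevF :: "(nat \<Rightarrow> 'a set) \<Rightarrow> nat \<Rightarrow> 'a set" where
  "prevF F i = (if i = 0 then {} else F (i - 1))"

definition filtered_space :: "'a topology \<Rightarrow> nat \<Rightarrow> (nat \<Rightarrow> 'a set) \<Rightarrow> bool" where
  "filtered_space X n F \<longleftrightarrow>
     topspace X \<noteq> {} \<and> (\<forall>i\<le>n. closedin X (F i)) \<and> (\<forall>i<n. F i \<subseteq> F (Suc i))
     \<and> prevF F n \<subset> F n \<and> F n = topspace X"

definition stratum :: "'a topology \<Rightarrow> nat \<Rightarrow> (nat \<Rightarrow> 'a set) \<Rightarrow> 'a set \<Rightarrow> bool" where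
  "stratum X n F S \<longleftrightarrow>
     (\<exists>i\<le>n. S \<in> connected_components_of (subtopology X (F i - prevF F i)))"

definition stratum_level :: "nat \<Rightarrow> (nat \<Rightarrow> 'a set) \<Rightarrow> 'a set \<Rightarrow> nat" where
  "stratum_level n F S = (THE i. i \<le> n \<and> S \<subseteq> F i - prevF F i)"

definition codim :: "nat \<Rightarrow> (nat \<Rightarrow> 'a set) \<Rightarrow> 'a set \<Rightarrow> nat" where
  "codim n F S = n - stratum_level n F S"

definition singular_stratum :: "'a topology \<Rightarrow> nat \<Rightarrow> (nat \<Rightarrow> 'a set) \<Rightarrow> 'a set \<Rightarrow> bool" where
  "singular_stratum X n F S \<longleftrightarrow> stratum X n F S \<and> stratum_level n F S < n"

definition perversity ::
  "'a topology \<Rightarrow> nat \<Rightarrow> (nat \<Rightarrow> 'a set) \<Rightarrow> ('a set \<Rightarrow> int extended) \<Rightarrow> bool" where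
  "perversity X n F p \<longleftrightarrow>
     (\<forall>S. stratum X n F S \<and> stratum_level n F S = n \<longrightarrow> p S = Fin 0)"

text \<open>D p = t - p, with t(S) = codim S - 2.\<close>
definition dual_perv ::
  "nat \<Rightarrow> (nat \<Rightarrow> 'a set) \<Rightarrow> ('a set \<Rightarrow> int extended) \<Rightarrow> 'a set \<Rightarrow> int extended" where
  "dual_perv n F p S = (case p S of
       Fin q \<Rightarrow> Fin (int (codim n F S) - 2 - q)
     | Pinf \<Rightarrow> Minf
     | Minf \<Rightarrow> Pinf)"

definition induced_perv ::
  "'a topology \<Rightarrow> nat \<Rightarrow> (nat \<Rightarrow> 'a set) \<Rightarrow> ('a set \<Rightarrow> int extended) \<Rightarrow> 'a set
     \<Rightarrow> 'a set \<Rightarrow> int extended" where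
  "induced_perv X n F p U T = p (THE S. stratum X n F S \<and> T \<subseteq> S)"

definition chull :: "(nat \<Rightarrow> real) set \<Rightarrow> (nat \<Rightarrow> real) set" where
  "chull P = {x. \<exists>u. (\<forall>v\<in>P. 0 \<le> u v) \<and> sum u P = 1 \<and> x = (\<lambda>i. \<Sum>v\<in>P. u v * v i)}"

text \<open>pdim_le A k: A is contained in a polyhedron (finite union of geometric
  simplices) of dimension at most k.  For k < 0 this forces A to be empty,
  matching the convention that the empty set has dimension -infinity.\<close>
definition pdim_le :: "(nat \<Rightarrow> real) set \<Rightarrow> int extended \<Rightarrow> bool" where
  "pdim_le A e = (case e of
       Pinf \<Rightarrow> True
     | Minf \<Rightarrow> A = {}
     | Fin k \<Rightarrow> (\<exists>V. finite V \<and> (\<forall>P\<in>V. finite P \<and> int (card P) \<le> k + 1)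
                      \<and> A \<subseteq> (\<Union>P\<in>V. chull P)))"

definition allowable ::
  "'a topology \<Rightarrow> nat \<Rightarrow> (nat \<Rightarrow> 'a set) \<Rightarrow> ('a set \<Rightarrow> int extended) \<Rightarrow> nat
     \<Rightarrow> ((nat \<Rightarrow> real) \<Rightarrow> 'a) \<Rightarrow> bool" where
  "allowable X n F p j \<sigma> \<longleftrightarrow>
     (\<forall>S. singular_stratum X n F S \<longrightarrow>
        pdim_le {t \<in> standard_simplex j. \<sigma> t \<in> S}
                (Fin (int j - int (codim n F S)) + p S))"

inductive iter_face :: "nat \<Rightarrow> ((nat \<Rightarrow> real) \<Rightarrow> 'a) \<Rightarrow> nat \<Rightarrow> ((nat \<Rightarrow> real) \<Rightarrow> 'a) \<Rightarrow> bool"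
  for j \<sigma> where
  self: "iter_face j \<sigma> j \<sigma>"
| face: "iter_face j \<sigma> (Suc k) \<tau> \<Longrightarrow> i \<le> Suc k \<Longrightarrow> iter_face j \<sigma> k (singular_face (Suc k) i \<tau>)"

definition full ::
  "'a topology \<Rightarrow> nat \<Rightarrow> (nat \<Rightarrow> 'a set) \<Rightarrow> ('a set \<Rightarrow> int extended) \<Rightarrow> nat
     \<Rightarrow> ((nat \<Rightarrow> real) \<Rightarrow> 'a) \<Rightarrow> bool" where
  "full X n F p j \<sigma> \<longleftrightarrow> (\<forall>k \<tau>. iter_face j \<sigma> k \<tau> \<longrightarrow> allowable X n F p k \<tau>)"

text \<open>A simplicial subset of Sing X is represented by its family of sets of
  j-simplices; the simplicial structure is the one of Sing X.\<close>
definition gajer ::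
  "'a topology \<Rightarrow> nat \<Rightarrow> (nat \<Rightarrow> 'a set) \<Rightarrow> ('a set \<Rightarrow> int extended)
     \<Rightarrow> nat \<Rightarrow> ((nat \<Rightarrow> real) \<Rightarrow> 'a) set" where
  "gajer X n F p j = {\<sigma>. singular_simplex j X \<sigma> \<and> full X n F p j \<sigma>}"

text \<open>For a monotone map theta from [m] to [k], the operator theta^* sends a
  k-simplex sigma to sigma composed with the affine map Delta^m to Delta^k
  sending vertex e_i to e_(theta i).\<close>
definition simp_op :: "nat \<Rightarrow> (nat \<Rightarrow> nat) \<Rightarrow> ((nat \<Rightarrow> real) \<Rightarrow> 'a) \<Rightarrow> (nat \<Rightarrow> real) \<Rightarrow> 'a" where
  "simp_op m \<theta> \<sigma> =
     simplex_map m \<sigma> (oriented_simplex m (\<lambda>i l. if l = \<theta> i then 1 else 0))"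

definition simp_map :: "nat \<Rightarrow> nat \<Rightarrow> (nat \<Rightarrow> nat) \<Rightarrow> bool" where
  "simp_map m k \<theta> \<longleftrightarrow> mono_on {..m} \<theta> \<and> \<theta> ` {..m} \<subseteq> {..k}"

definition skeleton :: "int extended \<Rightarrow> (nat \<Rightarrow> ((nat \<Rightarrow> real) \<Rightarrow> 'a) set)
     \<Rightarrow> nat \<Rightarrow> ((nat \<Rightarrow> real) \<Rightarrow> 'a) set" where
  "skeleton l K m =
     {simp_op m \<theta> \<tau> | \<theta> \<tau> k. Fin (int k) \<le> l \<and> \<tau> \<in> K k \<and> simp_map m k \<theta>}"

definition simp_iso :: "(nat \<Rightarrow> ((nat \<Rightarrow> real) \<Rightarrow> 'a) set) \<Rightarrow> (nat \<Rightarrow> ((nat \<Rightarrow> real) \<Rightarrow> 'b) set) \<Rightarrow> bool" where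
  "simp_iso K L \<longleftrightarrow>
     (\<exists>\<phi>. (\<forall>m. bij_betw (\<phi> m) (K m) (L m)) \<and>
          (\<forall>m k \<theta> \<sigma>. simp_map m k \<theta> \<and> \<sigma> \<in> K k \<longrightarrow>
               \<phi> m (simp_op m \<theta> \<sigma>) = simp_op m \<theta> (\<phi> k \<sigma>)))"

end

theory Submission
  imports Defs
begin

lemma chain_mono:
  assumes "\<forall>i<n. F i \<subseteq> F (Suc i)" "i \<le> k" "k \<le> n"
  shows "F i \<subseteq> (F k :: 'a set)"
  using assms(2,3)
proof (induction k)
  case 0 then show ?case by simp
next
  case (Suc k)
  show ?case
  proof (cases "i = Suc k")
    case False
    then have "F i \<subseteq> F k" using Suc by simp
    also have "F k \<subseteq> F (Suc k)" using assms(1) Suc.prems by simp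
    finally show ?thesis .
  qed simp
qed

lemma levels_disjoint:
  assumes "filtered_space X n F" "i \<le> n" "j \<le> n" "i < j"
  shows "(F i - prevF F i) \<inter> (F j - prevF F j) = {}"
proof -
  have m: "\<forall>i<n. F i \<subseteq> F (Suc i)" using assms(1) unfolding filtered_space_def by blast
  have "F i \<subseteq> F (j - 1)"
    by (rule chain_mono[OF m]) (use assms in linarith)+
  then show ?thesis using assms(4) unfolding prevF_def by auto
qed

lemma levels_disjoint':
  assumes "filtered_space X n F" "i \<le> n" "j \<le> n" "i \<noteq> j"
  shows "(F i - prevF F i) \<inter> (F j - prevF F j) = {}"
  using levels_disjoint[OF assms(1)] assms(2-4)
  by (metis inf_commute linorder_neqE_nat)

lemma stratum_unique:
  assumes "filtered_space X n F" "stratum X n F S" "stratum X n F T" "T \<subseteq> S"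
  shows "S = T"
proof -
  obtain i where i: "i \<le> n" "S \<in> connected_components_of (subtopology X (F i - prevF F i))"
    using assms(2) unfolding stratum_def by blast
  obtain j where j: "j \<le> n" "T \<in> connected_components_of (subtopology X (F j - prevF F j))"
    using assms(3) unfolding stratum_def by blast
  have Tne: "T \<noteq> {}" using j nonempty_connected_components_of by blast
  have "S \<subseteq> F i - prevF F i" using i connected_components_of_subset by fastforce
  moreover have "T \<subseteq> F j - prevF F j" using j connected_components_of_subset by fastforce
  ultimately have "i = j" using levels_disjoint'[OF assms(1) i(1) j(1)] Tne assms(4) by blast
  then have Sj: "S \<in> connected_components_of (subtopology X (F j - prevF F j))" using i(2) by simp
  have nd: "\<not> disjnt T S" using Tne assms(4) unfolding disjnt_def by blast
  have "S \<subseteq> T"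
    by (rule connected_components_of_maximal[OF j(2) connectedin_connected_components_of[OF Sj] nd])
  then show ?thesis using assms(4) by blast
qed

lemma pdim_le_empty: "pdim_le {} e"
  unfolding pdim_le_def by (cases e) (auto intro: exI[of _ "{}"])

lemma pdim_le_neg:
  assumes "pdim_le A (Fin m)" "m < 0"
  shows "A = {}"
proof -
  obtain V where V: "finite V" "\<forall>P\<in>V. finite P \<and> int (card P) \<le> m + 1" "A \<subseteq> (\<Union>P\<in>V. chull P)"
    using assms(1) unfolding pdim_le_def by auto
  have "\<forall>P\<in>V. P = {}"
  proof
    fix P assume "P \<in> V"
    then have "finite P" "int (card P) \<le> m + 1" using V(2) by auto
    then have "card P = 0" using assms(2) by linarith
    then show "P = {}" using \<open>finite P\<close> by simp
  qed
  moreover have "chull {} = {}" unfolding chull_def by auto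
  ultimately have "\<forall>P\<in>V. chull P = {}" by metis
  then show ?thesis using V(3) by blast
qed

lemma iter_face_singular:
  assumes "iter_face j \<sigma> k \<tau>" "singular_simplex j Y \<sigma>"
  shows "singular_simplex k Y \<tau>"
  using assms
proof (induction rule: iter_face.induct)
  case self then show ?case by simp
next
  case (face k \<tau> i)
  then show ?case using singular_simplex_singular_face[of "Suc k" Y \<tau> i] by simp
qed

lemma comp_remove_point:
  assumes "T \<in> connected_components_of (subtopology X (A - {x}))"
    and "x \<in> A \<Longrightarrow> {x} \<in> connected_components_of (subtopology X A)"
  shows "T \<in> connected_components_of (subtopology X A)"
proof -
  have Tne: "T \<noteq> {}" by (rule nonempty_connected_components_of[OF assms(1)])
  then obtain a where a: "a \<in> T" by blast
  have Tc0: "connectedin (subtopology X (A - {x})) T" by (rule connectedin_connected_components_of[OF assms(1)])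
  have Tc: "connectedin X T" "T \<subseteq> A - {x}" using Tc0 unfolding connectedin_subtopology by simp_all
  have Ttop: "T \<subseteq> topspace (subtopology X (A - {x}))" by (rule connected_components_of_subset[OF assms(1)])
  have "T \<subseteq> topspace X" using Ttop by simp
  then have "a \<in> topspace X" using a by blast
  moreover have "a \<in> A" using Tc(2) a by blast
  ultimately have aX: "a \<in> topspace (subtopology X A)" by simp
  define C where "C = connected_component_of_set (subtopology X A) a"
  have C: "C \<in> connected_components_of (subtopology X A)"
    unfolding C_def connected_component_in_connected_components_of by (rule aX)
  have aC: "a \<in> C" unfolding C_def mem_Collect_eq connected_component_of_refl by (rule aX)
  have TcA: "connectedin (subtopology X A) T" using Tc unfolding connectedin_subtopology by blast
  have nd1: "\<not> disjnt C T" using a aC unfolding disjnt_def by blast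
  have TC: "T \<subseteq> C" by (rule connected_components_of_maximal[OF C TcA nd1])
  have Cc: "connectedin (subtopology X A) C" by (rule connectedin_connected_components_of[OF C])
  have CA0: "C \<subseteq> topspace (subtopology X A)" by (rule connected_components_of_subset[OF C])
  then have CA: "C \<subseteq> A" by simp
  have xC: "x \<notin> C"
  proof
    assume xC: "x \<in> C"
    then have "x \<in> A" using CA by blast
    then have xs: "{x} \<in> connected_components_of (subtopology X A)" by (rule assms(2))
    have nd: "\<not> disjnt {x} C" using xC unfolding disjnt_def by blast
    have "C \<subseteq> {x}" by (rule connected_components_of_maximal[OF xs Cc nd])
    then show False using TC a Tc(2) by blast
  qed
  have CcX: "connectedin X C" using Cc unfolding connectedin_subtopology by blast
  have "C \<subseteq> A - {x}" using CA xC by blast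
  then have Cc2: "connectedin (subtopology X (A - {x})) C"
    using CcX unfolding connectedin_subtopology by blast
  have nd2: "\<not> disjnt T C" using a TC unfolding disjnt_def by blast
  have "C \<subseteq> T" by (rule connected_components_of_maximal[OF assms(1) Cc2 nd2])
  then have "T = C" using TC by blast
  then show ?thesis using C by simp
qed

lemma comp_keep:
  assumes "S \<in> connected_components_of (subtopology X A)" "x \<notin> S"
  shows "S \<in> connected_components_of (subtopology X (A - {x}))"
proof -
  have "S \<subseteq> topspace (subtopology X A)" by (rule connected_components_of_subset[OF assms(1)])
  then have "S \<subseteq> A" by simp
  then have "S \<subseteq> A - {x}" using assms(2) by blast
  from connected_components_of_subtopology[OF assms(1) this]
  have "S \<in> connected_components_of (subtopology X (A \<inter> (A - {x})))"
    by (simp only: subtopology_subtopology)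
  moreover have "A \<inter> (A - {x}) = A - {x}" by blast
  ultimately show ?thesis by simp
qed

context
  fixes X :: "'a topology" and n :: nat and F :: "nat \<Rightarrow> 'a set" and x :: 'a
  assumes fs: "filtered_space X n F" and sx: "singular_stratum X n F {x}"
begin

lemma F_sub: "i \<le> n \<Longrightarrow> F i \<subseteq> topspace X"
  using fs closedin_subset unfolding filtered_space_def by blast

lemma levelG:
  assumes "i \<le> n"
  shows "(F i \<inter> (topspace X - {x})) - prevF (\<lambda>i. F i \<inter> (topspace X - {x})) i
         = (F i - prevF F i) - {x}"
proof -
  have p: "prevF (\<lambda>i. F i \<inter> (topspace X - {x})) i = prevF F i \<inter> (topspace X - {x})"
    unfolding prevF_def by simp
  show ?thesis unfolding p using F_sub[OF assms] by blast
qed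

lemma subG:
  assumes "i \<le> n"
  shows "subtopology (subtopology X (topspace X - {x}))
           ((F i \<inter> (topspace X - {x})) - prevF (\<lambda>i. F i \<inter> (topspace X - {x})) i)
         = subtopology X ((F i - prevF F i) - {x})"
proof -
  have e: "(topspace X - {x}) \<inter> ((F i - prevF F i) - {x}) = (F i - prevF F i) - {x}"
    using F_sub[OF assms] by blast
  show ?thesis unfolding levelG[OF assms] subtopology_subtopology e ..
qed

lemma x_level: obtains i0 where "i0 \<le> n" "{x} \<in> connected_components_of (subtopology X (F i0 - prevF F i0))"
  using sx unfolding singular_stratum_def stratum_def by blast

lemma x_comp:
  assumes "i \<le> n" "x \<in> F i - prevF F i"
  shows "{x} \<in> connected_components_of (subtopology X (F i - prevF F i))"
proof -
  obtain i0 where i0: "i0 \<le> n" "{x} \<in> connected_components_of (subtopology X (F i0 - prevF F i0))"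
    by (rule x_level)
  have "x \<in> F i0 - prevF F i0" using connected_components_of_subset[OF i0(2)] by auto
  have "i = i0"
  proof (rule ccontr)
    assume "i \<noteq> i0"
    then have "(F i - prevF F i) \<inter> (F i0 - prevF F i0) = {}" by (rule levels_disjoint'[OF fs assms(1) i0(1)])
    then show False using assms(2) \<open>x \<in> F i0 - prevF F i0\<close> by blast
  qed
  then show ?thesis using i0 by simp
qed

lemma stratumG:
  "stratum (subtopology X (topspace X - {x})) n (\<lambda>i. F i \<inter> (topspace X - {x})) T
   \<longleftrightarrow> stratum X n F T \<and> x \<notin> T"
proof
  assume "stratum (subtopology X (topspace X - {x})) n (\<lambda>i. F i \<inter> (topspace X - {x})) T"
  then obtain i where i0: "i \<le> n"
    "T \<in> connected_components_of (subtopology (subtopology X (topspace X - {x}))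
           ((F i \<inter> (topspace X - {x})) - prevF (\<lambda>i. F i \<inter> (topspace X - {x})) i))"
    unfolding stratum_def by blast
  have i: "i \<le> n" "T \<in> connected_components_of (subtopology X ((F i - prevF F i) - {x}))"
    using i0 unfolding subG[OF i0(1)] by simp_all
  have "x \<notin> T" using connected_components_of_subset[OF i(2)] by auto
  moreover have "T \<in> connected_components_of (subtopology X (F i - prevF F i))"
    by (rule comp_remove_point[OF i(2) x_comp[OF i(1)]])
  ultimately show "stratum X n F T \<and> x \<notin> T" unfolding stratum_def using i(1) by blast
next
  assume a: "stratum X n F T \<and> x \<notin> T"
  then obtain i where i: "i \<le> n" "T \<in> connected_components_of (subtopology X (F i - prevF F i))"
    unfolding stratum_def by blast
  have "T \<in> connected_components_of (subtopology X ((F i - prevF F i) - {x}))"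
    by (rule comp_keep[OF i(2)]) (use a in blast)
  then have "T \<in> connected_components_of (subtopology (subtopology X (topspace X - {x}))
           ((F i \<inter> (topspace X - {x})) - prevF (\<lambda>i. F i \<inter> (topspace X - {x})) i))"
    unfolding subG[OF i(1)] .
  then show "stratum (subtopology X (topspace X - {x})) n (\<lambda>i. F i \<inter> (topspace X - {x})) T"
    unfolding stratum_def using i(1) by blast
qed

lemma stratum_sub: "stratum X n F T \<Longrightarrow> T \<subseteq> topspace X"
  unfolding stratum_def using connected_components_of_subset by fastforce

lemma levelG_eq:
  assumes "T \<subseteq> topspace X - {x}"
  shows "stratum_level n (\<lambda>i. F i \<inter> (topspace X - {x})) T = stratum_level n F T"
proof -
  have "(\<lambda>i. i \<le> n \<and> T \<subseteq> (F i \<inter> (topspace X - {x})) - prevF (\<lambda>i. F i \<inter> (topspace X - {x})) i)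
          = (\<lambda>i. i \<le> n \<and> T \<subseteq> F i - prevF F i)"
  proof (rule ext)
    fix i show "(i \<le> n \<and> T \<subseteq> (F i \<inter> (topspace X - {x})) - prevF (\<lambda>i. F i \<inter> (topspace X - {x})) i)
          = (i \<le> n \<and> T \<subseteq> F i - prevF F i)"
    proof (cases "i \<le> n")
      case True
      show ?thesis unfolding levelG[OF True] using True assms by blast
    qed simp
  qed
  then show ?thesis unfolding stratum_level_def by simp
qed

lemma codimG_eq:
  assumes "T \<subseteq> topspace X - {x}"
  shows "codim n (\<lambda>i. F i \<inter> (topspace X - {x})) T = codim n F T"
  unfolding codim_def levelG_eq[OF assms] ..

lemma singG:
  "singular_stratum (subtopology X (topspace X - {x})) n (\<lambda>i. F i \<inter> (topspace X - {x})) T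
   \<longleftrightarrow> singular_stratum X n F T \<and> x \<notin> T"
proof
  assume L: "singular_stratum (subtopology X (topspace X - {x})) n (\<lambda>i. F i \<inter> (topspace X - {x})) T"
  then have st: "stratum X n F T \<and> x \<notin> T" unfolding singular_stratum_def stratumG by (elim conjE) (intro conjI)
  then have "T \<subseteq> topspace X - {x}" using stratum_sub by blast
  note e = levelG_eq[OF this]
  show "singular_stratum X n F T \<and> x \<notin> T"
    using L st unfolding singular_stratum_def e by blast
next
  assume L: "singular_stratum X n F T \<and> x \<notin> T"
  then have st: "stratum X n F T \<and> x \<notin> T" unfolding singular_stratum_def by blast
  then have "T \<subseteq> topspace X - {x}" using stratum_sub by blast
  note e = levelG_eq[OF this]
  show "singular_stratum (subtopology X (topspace X - {x})) n (\<lambda>i. F i \<inter> (topspace X - {x})) T"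
    using L st unfolding singular_stratum_def e stratumG by blast
qed

lemma induced_eq:
  assumes "stratum X n F T"
  shows "induced_perv X n F p U T = p T"
proof -
  have "(THE S. stratum X n F S \<and> T \<subseteq> S) = T"
    by (rule the_equality) (use assms stratum_unique[OF fs] in blast)+
  then show ?thesis unfolding induced_perv_def by simp
qed

lemma allowG_iff:
  "allowable (subtopology X (topspace X - {x})) n (\<lambda>i. F i \<inter> (topspace X - {x}))
      (induced_perv X n F p (topspace X - {x})) k \<sigma>
   \<longleftrightarrow> (\<forall>S. singular_stratum X n F S \<and> x \<notin> S \<longrightarrow>
        pdim_le {t \<in> standard_simplex k. \<sigma> t \<in> S} (Fin (int k - int (codim n F S)) + p S))"
proof -
  have eqs: "codim n (\<lambda>i. F i \<inter> (topspace X - {x})) S = codim n F S \<and>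
     induced_perv X n F p (topspace X - {x}) S = p S"
    if "singular_stratum X n F S \<and> x \<notin> S" for S
  proof -
    have st: "stratum X n F S" using that unfolding singular_stratum_def by (elim conjE)
    have "S \<subseteq> topspace X - {x}" using stratum_sub[OF st] that by blast
    then show ?thesis using codimG_eq[of S] induced_eq[OF st] by simp
  qed
  show ?thesis unfolding allowable_def singG
  proof (intro iffI allI impI)
    fix S assume L: "\<forall>S. singular_stratum X n F S \<and> x \<notin> S \<longrightarrow>
        pdim_le {t \<in> standard_simplex k. \<sigma> t \<in> S}
         (Fin (int k - int (codim n (\<lambda>i. F i \<inter> (topspace X - {x})) S)) + induced_perv X n F p (topspace X - {x}) S)"
      and S: "singular_stratum X n F S \<and> x \<notin> S"
    have "pdim_le {t \<in> standard_simplex k. \<sigma> t \<in> S}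
         (Fin (int k - int (codim n (\<lambda>i. F i \<inter> (topspace X - {x})) S)) + induced_perv X n F p (topspace X - {x}) S)"
      using L S by blast
    then show "pdim_le {t \<in> standard_simplex k. \<sigma> t \<in> S} (Fin (int k - int (codim n F S)) + p S)"
      using eqs[OF S] by simp
  next
    fix S assume L: "\<forall>S. singular_stratum X n F S \<and> x \<notin> S \<longrightarrow>
        pdim_le {t \<in> standard_simplex k. \<sigma> t \<in> S} (Fin (int k - int (codim n F S)) + p S)"
      and S: "singular_stratum X n F S \<and> x \<notin> S"
    have "pdim_le {t \<in> standard_simplex k. \<sigma> t \<in> S} (Fin (int k - int (codim n F S)) + p S)"
      using L S by blast
    then show "pdim_le {t \<in> standard_simplex k. \<sigma> t \<in> S}
         (Fin (int k - int (codim n (\<lambda>i. F i \<inter> (topspace X - {x})) S)) + induced_perv X n F p (topspace X - {x}) S)"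
      using eqs[OF S] by simp
  qed
qed

lemma allow_XG:
  "allowable X n F p k \<sigma> \<Longrightarrow>
   allowable (subtopology X (topspace X - {x})) n (\<lambda>i. F i \<inter> (topspace X - {x}))
      (induced_perv X n F p (topspace X - {x})) k \<sigma>"
  unfolding allowG_iff unfolding allowable_def by blast

lemma allow_GX:
  assumes "allowable (subtopology X (topspace X - {x})) n (\<lambda>i. F i \<inter> (topspace X - {x}))
      (induced_perv X n F p (topspace X - {x})) k \<sigma>"
    and "\<forall>t \<in> standard_simplex k. \<sigma> t \<noteq> x"
  shows "allowable X n F p k \<sigma>"
  unfolding allowable_def
proof (intro allI impI)
  fix S assume S: "singular_stratum X n F S"
  show "pdim_le {t \<in> standard_simplex k. \<sigma> t \<in> S} (Fin (int k - int (codim n F S)) + p S)"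
  proof (cases "x \<in> S")
    case True
    have "{x} = S" using stratum_unique[OF fs, of S "{x}"] S sx True
      unfolding singular_stratum_def by blast
    have E: "{t \<in> standard_simplex k. \<sigma> t \<in> S} = {}" using assms(2) \<open>{x} = S\<close> by auto
    show ?thesis unfolding E by (rule pdim_le_empty)
  next
    case False
    then show ?thesis using assms(1) S unfolding allowG_iff by blast
  qed
qed


lemma avoid_x:
  assumes "Fin (int k) \<le> dual_perv n F p {x} + 1" "allowable X n F p k \<sigma>"
  shows "\<forall>t \<in> standard_simplex k. \<sigma> t \<noteq> x"
proof -
  have pd: "pdim_le {t \<in> standard_simplex k. \<sigma> t \<in> {x}} (Fin (int k - int (codim n F {x})) + p {x})"
    using assms(2) sx unfolding allowable_def by blast
  have "{t \<in> standard_simplex k. \<sigma> t \<in> {x}} = {}"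
  proof (cases "p {x}")
    case (Fin q)
    have "Fin (int k) \<le> Fin (int (codim n F {x}) - 2 - q + 1)"
      using assms(1) Fin unfolding dual_perv_def by (simp add: one_extended_def)
    then have "int k - int (codim n F {x}) + q < 0" by simp
    moreover have "pdim_le {t \<in> standard_simplex k. \<sigma> t \<in> {x}} (Fin (int k - int (codim n F {x}) + q))"
      using pd Fin by simp
    ultimately show ?thesis using pdim_le_neg by blast
  next
    case Pinf
    then have "Fin (int k) \<le> Minf" using assms(1) unfolding dual_perv_def by (simp add: one_extended_def)
    then show ?thesis by simp
  next
    case Minf
    then show ?thesis using pd by (simp add: pdim_le_def)
  qed
  then show ?thesis by blast
qed

lemma gajer_eq:
  assumes "Fin (int k) \<le> dual_perv n F p {x} + 1"
  shows "gajer X n F p k = gajer (subtopology X (topspace X - {x})) n (\<lambda>i. F i \<inter> (topspace X - {x}))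
                     (induced_perv X n F p (topspace X - {x})) k"
proof (rule Set.set_eqI)
  fix \<sigma>
  show "\<sigma> \<in> gajer X n F p k \<longleftrightarrow> \<sigma> \<in> gajer (subtopology X (topspace X - {x})) n (\<lambda>i. F i \<inter> (topspace X - {x}))
                     (induced_perv X n F p (topspace X - {x})) k"
  proof
    assume "\<sigma> \<in> gajer X n F p k"
    then have ss: "singular_simplex k X \<sigma>" and fu: "full X n F p k \<sigma>" unfolding gajer_def by auto
    have "allowable X n F p k \<sigma>" using fu iter_face.self unfolding full_def by blast
    then have av: "\<forall>t \<in> standard_simplex k. \<sigma> t \<noteq> x" using avoid_x assms by blast
    have cm: "continuous_map (subtopology (powertop_real UNIV) (standard_simplex k)) X \<sigma>"
      using ss unfolding singular_simplex_def by blast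
    have "\<sigma> ` topspace (subtopology (powertop_real UNIV) (standard_simplex k)) \<subseteq> topspace X - {x}"
      using continuous_map_image_subset_topspace[OF cm] av by auto
    then have "singular_simplex k (subtopology X (topspace X - {x})) \<sigma>"
      using ss cm unfolding singular_simplex_def continuous_map_in_subtopology by blast
    moreover have "full (subtopology X (topspace X - {x})) n (\<lambda>i. F i \<inter> (topspace X - {x}))
                     (induced_perv X n F p (topspace X - {x})) k \<sigma>"
      using fu allow_XG unfolding full_def by blast
    ultimately show "\<sigma> \<in> gajer (subtopology X (topspace X - {x})) n (\<lambda>i. F i \<inter> (topspace X - {x}))
                     (induced_perv X n F p (topspace X - {x})) k" unfolding gajer_def by blast
  next
    assume "\<sigma> \<in> gajer (subtopology X (topspace X - {x})) n (\<lambda>i. F i \<inter> (topspace X - {x}))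
                     (induced_perv X n F p (topspace X - {x})) k"
    then have ss: "singular_simplex k (subtopology X (topspace X - {x})) \<sigma>"
      and fu: "full (subtopology X (topspace X - {x})) n (\<lambda>i. F i \<inter> (topspace X - {x}))
                     (induced_perv X n F p (topspace X - {x})) k \<sigma>" unfolding gajer_def by auto
    have "singular_simplex k X \<sigma>"
      using ss unfolding singular_simplex_def continuous_map_in_subtopology by blast
    moreover have "full X n F p k \<sigma>"
      unfolding full_def
    proof (intro allI impI)
      fix k' \<tau> assume it: "iter_face k \<sigma> k' \<tau>"
      have s2: "singular_simplex k' (subtopology X (topspace X - {x})) \<tau>"
        by (rule iter_face_singular[OF it ss])
      have "\<forall>t \<in> standard_simplex k'. \<tau> t \<noteq> x"
      proof
        fix t assume t: "t \<in> standard_simplex k'"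
        have cm: "continuous_map (subtopology (powertop_real UNIV) (standard_simplex k'))
                    (subtopology X (topspace X - {x})) \<tau>"
          using s2 unfolding singular_simplex_def by blast
        have "\<tau> t \<in> topspace (subtopology X (topspace X - {x}))"
          using continuous_map_image_subset_topspace[OF cm] t by auto
        then show "\<tau> t \<noteq> x" by simp
      qed
      moreover have "allowable (subtopology X (topspace X - {x})) n (\<lambda>i. F i \<inter> (topspace X - {x}))
                     (induced_perv X n F p (topspace X - {x})) k' \<tau>"
        using fu it unfolding full_def by blast
      ultimately show "allowable X n F p k' \<tau>" using allow_GX by blast
    qed
    ultimately show "\<sigma> \<in> gajer X n F p k" unfolding gajer_def by blast
  qed
qed

end

lemma skeleton_cong:
  assumes "\<And>k. Fin (int k) \<le> l \<Longrightarrow> K k = L k"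
  shows "skeleton l K = skeleton l L"
proof (rule ext)
  fix m
  show "skeleton l K m = skeleton l L m"
    unfolding skeleton_def
  proof (intro Collect_cong iffI)
    fix y assume "\<exists>\<theta> \<tau> k. y = simp_op m \<theta> \<tau> \<and> Fin (int k) \<le> l \<and> \<tau> \<in> K k \<and> simp_map m k \<theta>"
    then obtain \<theta> \<tau> k where "y = simp_op m \<theta> \<tau>" "Fin (int k) \<le> l" "\<tau> \<in> K k" "simp_map m k \<theta>" by blast
    then show "\<exists>\<theta> \<tau> k. y = simp_op m \<theta> \<tau> \<and> Fin (int k) \<le> l \<and> \<tau> \<in> L k \<and> simp_map m k \<theta>"
      using assms by blast
  next
    fix y assume "\<exists>\<theta> \<tau> k. y = simp_op m \<theta> \<tau> \<and> Fin (int k) \<le> l \<and> \<tau> \<in> L k \<and> simp_map m k \<theta>"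
    then obtain \<theta> \<tau> k where "y = simp_op m \<theta> \<tau>" "Fin (int k) \<le> l" "\<tau> \<in> L k" "simp_map m k \<theta>" by blast
    then show "\<exists>\<theta> \<tau> k. y = simp_op m \<theta> \<tau> \<and> Fin (int k) \<le> l \<and> \<tau> \<in> K k \<and> simp_map m k \<theta>"
      using assms by blast
  qed
qed

lemma simp_iso_refl: "simp_iso K K"
  unfolding simp_iso_def by (rule exI[of _ "\<lambda>m. id"]) simp

theorem mainTheorem12:
  fixes X :: "'a topology" and n :: nat and F :: "nat \<Rightarrow> 'a set"
    and p :: "'a set \<Rightarrow> int extended" and x :: 'a
  assumes "filtered_space X n F"
    and "perversity X n F p"
    and "singular_stratum X n F {x}"
  shows "simp_iso
           (skeleton (dual_perv n F p {x} + 1) (gajer X n F p))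
           (skeleton (dual_perv n F p {x} + 1)
              (gajer (subtopology X (topspace X - {x})) n (\<lambda>i. F i \<inter> (topspace X - {x}))
                     (induced_perv X n F p (topspace X - {x}))))"
proof -
  have "skeleton (dual_perv n F p {x} + 1) (gajer X n F p) =
        skeleton (dual_perv n F p {x} + 1)
              (gajer (subtopology X (topspace X - {x})) n (\<lambda>i. F i \<inter> (topspace X - {x}))
                     (induced_perv X n F p (topspace X - {x})))"
    by (rule skeleton_cong) (rule gajer_eq[OF assms(1) assms(3)])
  then show ?thesis by (simp only: simp_iso_refl)
qed

end
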